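(* Let $G$ be an uncountable Polish group satisfying condition (C). If $A$ is an analytic subset of $G$ such that $A^{-1}A$ is meager, then the set \[ T(A)=\{\mu\in P(G): \mu(g_1Ag_2)=0 \text{ for all } g_1,g_2\in G\} \] is co-meager in $P(G)$.
   Context: A Polish group $G$ satisfies condition (C) if for every analytic and meager subset $A$ of $G$, its conjugate saturation $[A]=\{x\in G: \exists g\in G\ \exists a\in A \text{ with } x=gag^{-1}\}$ is meager in $G$. $P(G)$ denotes the space of Borel probability measures on $G$ with the weak* topology. A subset of a Polish space is analytic if it is a continuous image of $\mathbb{N}^{\mathbb{N}}$. $A^{-1}A=\{a^{-1}b: a,b\in A\}$. *)

theory Defs
  imports "HOL-Analysis.Analysis" "HOL-Probability.Probability"
begin

definition polish_group :: "('a::polish_space \<Rightarrow> 'a \<Rightarrow> 'a) \<Rightarrow> 'a \<Rightarrow> ('a \<Rightarrow> 'a) \<Rightarrow> bool" where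
  "polish_group m e iv \<longleftrightarrow> group m e iv
     \<and> continuous_on UNIV (\<lambda>p. m (fst p) (snd p)) \<and> continuous_on UNIV iv"

definition nowhere_dense_in :: "'a topology \<Rightarrow> 'a set \<Rightarrow> bool" where
  "nowhere_dense_in X S \<longleftrightarrow> S \<subseteq> topspace X \<and> X interior_of (X closure_of S) = {}"

definition meager_in :: "'a topology \<Rightarrow> 'a set \<Rightarrow> bool" where
  "meager_in X S \<longleftrightarrow> S \<subseteq> topspace X \<and>
     (\<exists>F :: nat \<Rightarrow> 'a set. (\<forall>n. nowhere_dense_in X (F n)) \<and> S \<subseteq> (\<Union>n. F n))"

definition comeager_in :: "'a topology \<Rightarrow> 'a set \<Rightarrow> bool" where
  "comeager_in X S \<longleftrightarrow> S \<subseteq> topspace X \<and> meager_in X (topspace X - S)"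

definition analytic :: "'a::topological_space set \<Rightarrow> bool" where
  "analytic A \<longleftrightarrow> (\<exists>f :: (nat \<Rightarrow> nat) \<Rightarrow> 'a. continuous_on UNIV f \<and> range f = A)"

definition conj_saturation :: "('a \<Rightarrow> 'a \<Rightarrow> 'a) \<Rightarrow> ('a \<Rightarrow> 'a) \<Rightarrow> 'a set \<Rightarrow> 'a set" where
  "conj_saturation m iv A = {x. \<exists>g a. a \<in> A \<and> x = m (m g a) (iv g)}"

definition condition_C :: "('a::topological_space \<Rightarrow> 'a \<Rightarrow> 'a) \<Rightarrow> ('a \<Rightarrow> 'a) \<Rightarrow> bool" where
  "condition_C m iv \<longleftrightarrow> (\<forall>A. analytic A \<and> meager_in euclidean A
      \<longrightarrow> meager_in euclidean (conj_saturation m iv A))"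

definition prob_measures :: "'a::topological_space measure set" where
  "prob_measures = {M. sets M = sets borel \<and> prob_space M}"

definition weak_star_topology :: "'a::topological_space measure topology" where
  "weak_star_topology = topology_generated_by
     (insert prob_measures
       {{M \<in> prob_measures. integral\<^sup>L M f \<in> U} | f U.
          continuous_on UNIV f \<and> bounded (range (f :: 'a \<Rightarrow> real)) \<and> open U})"

text \<open>The set T(A); the measure of the (analytic, hence universally measurable) set
  g1 A g2 is taken in the completion of \<mu>.\<close>
definition T_set :: "('a::topological_space \<Rightarrow> 'a \<Rightarrow> 'a) \<Rightarrow> 'a set \<Rightarrow> 'a measure set" where
  "T_set m A = {\<mu> \<in> prob_measures. \<forall>g1 g2.
      measure (completion \<mu>) ((\<lambda>a. m (m g1 a) g2) ` A) = 0}"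

end

theory Submission
  imports Defs
begin



lemma topspace_weak: "topspace weak_star_topology = prob_measures"
  unfolding weak_star_topology_def by auto

lemma openin_weak_gen:
  assumes "continuous_on UNIV f" "bounded (range (f :: 'a::topological_space \<Rightarrow> real))" "open S"
  shows "openin weak_star_topology {M \<in> prob_measures. integral\<^sup>L M f \<in> S}"
  unfolding weak_star_topology_def openin_topology_generated_by_iff
  by (rule generate_topology_on.Basis) (use assms in blast)

lemma openin_weak_P: "openin weak_star_topology prob_measures"
  by (metis openin_topspace topspace_weak)

definition good_list :: "(('a::topological_space \<Rightarrow> real) \<times> real) list \<Rightarrow> bool" where
  "good_list L \<longleftrightarrow> (\<forall>(f,\<epsilon>)\<in>set L. continuous_on UNIV f \<and> bounded (range f) \<and> \<epsilon> > 0)"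

definition wnbhd :: "'a::topological_space measure \<Rightarrow> (('a \<Rightarrow> real) \<times> real) list \<Rightarrow> 'a measure set" where
  "wnbhd \<mu> L = {\<nu> \<in> prob_measures. \<forall>(f,\<epsilon>)\<in>set L. \<bar>integral\<^sup>L \<nu> f - integral\<^sup>L \<mu> f\<bar> < \<epsilon>}"

lemma wnbhd_mono: "set L \<subseteq> set L' \<Longrightarrow> wnbhd \<mu> L' \<subseteq> wnbhd \<mu> L"
  unfolding wnbhd_def by auto

lemma weak_open_nbhd:
  assumes "openin weak_star_topology U" "\<mu> \<in> U"
  shows "\<exists>L. good_list L \<and> wnbhd \<mu> L \<subseteq> U"
proof -
  have "generate_topology_on (insert prob_measures
       {{M \<in> prob_measures. integral\<^sup>L M f \<in> U} | f U.
          continuous_on UNIV f \<and> bounded (range (f :: 'a \<Rightarrow> real)) \<and> open U}) U"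
    using assms(1) unfolding weak_star_topology_def openin_topology_generated_by_iff .
  then show ?thesis using assms(2)
  proof (induction arbitrary: \<mu>)
    case Empty then show ?case by simp
  next
    case (Int a b)
    then obtain L1 L2 where "good_list L1" "wnbhd \<mu> L1 \<subseteq> a" "good_list L2" "wnbhd \<mu> L2 \<subseteq> b"
      by (meson IntE)
    moreover have "wnbhd \<mu> (L1 @ L2) \<subseteq> wnbhd \<mu> L1" "wnbhd \<mu> (L1 @ L2) \<subseteq> wnbhd \<mu> L2"
      by (rule wnbhd_mono; simp)+
    moreover have "good_list (L1 @ L2)" using \<open>good_list L1\<close> \<open>good_list L2\<close>
      unfolding good_list_def by auto
    ultimately show ?case by blast
  next
    case (UN K)
    then obtain k where "k \<in> K" "\<mu> \<in> k" by auto
    with UN obtain L where "good_list L" "wnbhd \<mu> L \<subseteq> k" by blast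
    with \<open>k\<in>K\<close> show ?case by blast
  next
    case (Basis s)
    then have "s = prob_measures \<or> (\<exists>(f::'a\<Rightarrow>real) S. s = {M \<in> prob_measures. integral\<^sup>L M f \<in> S} \<and>
       continuous_on UNIV f \<and> bounded (range f) \<and> open S)" by (simp only: insert_iff mem_Collect_eq)
    then consider "s = prob_measures" | f S where "s = {M \<in> prob_measures. integral\<^sup>L M f \<in> S}"
       "continuous_on UNIV (f::'a\<Rightarrow>real)" "bounded (range f)" "open S" by metis
    then show ?case
    proof cases
      case 1 then show ?thesis by (intro exI[of _ "[]"]) (auto simp: good_list_def wnbhd_def)
    next
      case 2
      with Basis.prems have "integral\<^sup>L \<mu> f \<in> S" by auto
      with \<open>open S\<close> obtain e where e: "e > 0" "ball (integral\<^sup>L \<mu> f) e \<subseteq> S"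
        by (meson open_contains_ball)
      show ?thesis
        apply (intro exI[of _ "[(f,e)]"])
        using 2 e by (auto simp: good_list_def wnbhd_def dist_real_def subset_iff)
    qed
  qed
qed

lemma nowhere_dense_local:
  assumes "E \<subseteq> topspace X"
    and "\<And>U x. openin X U \<Longrightarrow> x \<in> U \<Longrightarrow> \<exists>V y. openin X V \<and> y \<in> V \<and> V \<subseteq> U \<and> V \<inter> E = {}"
  shows "nowhere_dense_in X E"
  unfolding nowhere_dense_in_def
proof (intro conjI assms(1))
  show "X interior_of (X closure_of E) = {}"
  proof (rule ccontr)
    assume "X interior_of (X closure_of E) \<noteq> {}"
    then obtain x where x: "x \<in> X interior_of (X closure_of E)" by auto
    have "openin X (X interior_of (X closure_of E))" by simp
    from assms(2)[OF this x] obtain V y where V: "openin X V" "y \<in> V" 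
       "V \<subseteq> X interior_of (X closure_of E)" "V \<inter> E = {}"
      by blast
    then have "y \<in> X closure_of E" using V(2,3) interior_of_subset[of X "X closure_of E"] by (meson subsetD)
    then have "\<exists>z\<in>E. z \<in> V" using V(1,2) unfolding in_closure_of by blast
    then show False using V(4) by blast
  qed
qed



definition dpmf :: "'i set \<Rightarrow> ('i \<Rightarrow> real) \<Rightarrow> 'i pmf" where
  "dpmf I v = embed_pmf (\<lambda>i. if i \<in> I then v i else 0)"

definition dmeas :: "'i set \<Rightarrow> ('i \<Rightarrow> real) \<Rightarrow> ('i \<Rightarrow> 'a::topological_space) \<Rightarrow> 'a measure" where
  "dmeas I v z = distr (measure_pmf (dpmf I v)) borel z"

lemma dpmf_nn_integral:
  assumes "finite I"
  shows "(\<integral>\<^sup>+i. ennreal (if i \<in> I then v i else 0) \<partial>count_space UNIV) = (\<Sum>i\<in>I. ennreal (v i))"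
proof -
  have "(\<integral>\<^sup>+i. ennreal (if i \<in> I then v i else 0) \<partial>count_space UNIV)
      = (\<integral>\<^sup>+i. ennreal (v i) * indicator I i \<partial>count_space UNIV)"
    by (intro nn_integral_cong) (auto simp: indicator_def)
  also have "\<dots> = (\<integral>\<^sup>+i. ennreal (v i) \<partial>count_space I)"
    by (simp add: nn_integral_count_space_indicator)
  also have "\<dots> = (\<Sum>i\<in>I. ennreal (v i))"
    using assms by (simp add: nn_integral_count_space_finite)
  finally show ?thesis .
qed

lemma pmf_dpmf:
  assumes "finite I" "\<And>i. i \<in> I \<Longrightarrow> v i \<ge> 0" "(\<Sum>i\<in>I. v i) = 1"
  shows "pmf (dpmf I v) i = (if i \<in> I then v i else 0)"
  unfolding dpmf_def
proof (rule pmf_embed_pmf)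
  show "\<And>x. 0 \<le> (if x \<in> I then v x else 0)" using assms by auto
  have "(\<Sum>i\<in>I. ennreal (v i)) = ennreal (\<Sum>i\<in>I. v i)"
    using assms by (intro sum_ennreal) auto
  then show "(\<integral>\<^sup>+x. ennreal (if x \<in> I then v x else 0) \<partial>count_space UNIV) = 1"
    using assms by (simp add: dpmf_nn_integral)
qed

lemma dmeas_prob:
  shows "dmeas I v z \<in> prob_measures"
  unfolding dmeas_def prob_measures_def
  by (auto intro!: measure_pmf.prob_space_distr)

lemma dmeas_integral:
  fixes f :: "'a::topological_space \<Rightarrow> real"
  assumes "finite I" "\<And>i. i \<in> I \<Longrightarrow> v i \<ge> 0" "(\<Sum>i\<in>I. v i) = 1"
    and "f \<in> borel_measurable borel"
  shows "integral\<^sup>L (dmeas I v z) f = (\<Sum>i\<in>I. v i * f (z i))"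
proof -
  have "integral\<^sup>L (dmeas I v z) f = (LINT i|measure_pmf (dpmf I v). f (z i))"
    unfolding dmeas_def using assms(4) by (subst integral_distr) auto
  also have "\<dots> = (\<Sum>i\<in>I. pmf (dpmf I v) i *\<^sub>R f (z i))"
    by (rule integral_measure_pmf[OF assms(1)]) (simp add: set_pmf_eq pmf_dpmf[OF assms(1-3)] split: if_splits)
  also have "\<dots> = (\<Sum>i\<in>I. v i * f (z i))"
    by (intro sum.cong) (auto simp: pmf_dpmf[OF assms(1-3)])
  finally show ?thesis .
qed




lemma prob_measuresD:
  assumes "\<mu> \<in> prob_measures"
  shows "sets \<mu> = sets borel" "prob_space \<mu>" "space \<mu> = UNIV"
  using assms unfolding prob_measures_def by (auto dest: sets_eq_imp_space_eq)

lemma meas_P: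
  assumes "\<mu> \<in> prob_measures" "f \<in> borel_measurable borel"
  shows "f \<in> borel_measurable \<mu>"
  by (subst measurable_cong_sets[OF prob_measuresD(1)[OF assms(1)] refl]) (rule assms(2))

lemma integrable_bounded_P:
  fixes f :: "'a::topological_space \<Rightarrow> real"
  assumes "\<mu> \<in> prob_measures" "f \<in> borel_measurable borel" "\<And>x. \<bar>f x\<bar> \<le> B"
  shows "integrable \<mu> f"
proof -
  interpret prob_space \<mu> using prob_measuresD(2)[OF assms(1)] .
  show ?thesis
  proof (rule integrable_const_bound[of _ B])
    show "AE x in \<mu>. norm (f x) \<le> B" using assms(3) by simp
    show "f \<in> borel_measurable \<mu>" by (rule meas_P[OF assms(1,2)])
  qed
qed

lemma bounded_range_abs:
  fixes f :: "'a \<Rightarrow> real"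
  assumes "bounded (range f)"
  obtains B where "\<And>x. \<bar>f x\<bar> \<le> B"
proof -
  from assms obtain a where "\<forall>x\<in>range f. norm x \<le> a" unfolding bounded_iff by blast
  then have "\<And>x. \<bar>f x\<bar> \<le> a" by simp
  then show ?thesis using that by blast
qed

lemma integrable_bc:
  fixes f :: "'a::topological_space \<Rightarrow> real"
  assumes "\<mu> \<in> prob_measures" "continuous_on UNIV f" "bounded (range f)"
  shows "integrable \<mu> f"
proof -
  obtain B where "\<And>x. \<bar>f x\<bar> \<le> B" using bounded_range_abs[OF assms(3)] by blast
  then show ?thesis using integrable_bounded_P[OF assms(1) borel_measurable_continuous_onI[OF assms(2)]] by blast
qed

lemma floor_eq_close:
  fixes a b \<eta> :: real
  assumes "\<eta> > 0" "\<lfloor>a / \<eta>\<rfloor> = \<lfloor>b / \<eta>\<rfloor>"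
  shows "\<bar>a - b\<bar> < \<eta>"
proof -
  have fa: "of_int \<lfloor>a / \<eta>\<rfloor> \<le> a / \<eta>" "a / \<eta> < of_int \<lfloor>a / \<eta>\<rfloor> + 1"
    by (rule of_int_floor_le, rule real_of_int_floor_add_one_gt)
  have fb: "of_int \<lfloor>b / \<eta>\<rfloor> \<le> b / \<eta>" "b / \<eta> < of_int \<lfloor>b / \<eta>\<rfloor> + 1"
    by (rule of_int_floor_le, rule real_of_int_floor_add_one_gt)
  have "a / \<eta> - b / \<eta> < 1" "b / \<eta> - a / \<eta> < 1" using fa fb assms(2) by linarith+
  then have "(a - b) / \<eta> < 1" "(b - a) / \<eta> < 1" by (simp_all add: diff_divide_distrib)
  then have "a - b < \<eta>" "b - a < \<eta>" using assms(1) by (simp_all add: pos_divide_less_eq)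
  then show ?thesis by linarith
qed

lemma approx_cells:
  fixes \<mu> :: "'a::topological_space measure"
  assumes mu: "\<mu> \<in> prob_measures"
    and fs: "\<And>f. f \<in> set fs \<Longrightarrow> continuous_on UNIV f \<and> bounded (range (f :: 'a \<Rightarrow> real))"
    and eta: "\<eta> > 0"
  shows "\<exists>(Cs :: int list set) w y. finite Cs \<and> (\<forall>l\<in>Cs. w l \<ge> 0) \<and> (\<Sum>l\<in>Cs. w l) = 1 \<and>
     (\<forall>f\<in>set fs. \<bar>(\<Sum>l\<in>Cs. w l * f (y l)) - integral\<^sup>L \<mu> f\<bar> \<le> \<eta>)"
proof -
  interpret prob_space \<mu> using prob_measuresD(2)[OF mu] .
  have sp: "space \<mu> = UNIV" using prob_measuresD(3)[OF mu] .
  define c where "c x = map (\<lambda>f. \<lfloor>f x / \<eta>\<rfloor>) fs" for x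
  define S where "S = (\<Union>f\<in>set fs. range (\<lambda>x. \<lfloor>f x / \<eta>\<rfloor>))"
  have finS: "finite S" unfolding S_def
  proof (rule finite_UN_I)
    show "finite (set fs)" by simp
    fix f assume "f \<in> set fs"
    then obtain B where B: "\<And>x. \<bar>f x\<bar> \<le> B" using fs bounded_range_abs by metis
    have "range (\<lambda>x. \<lfloor>f x / \<eta>\<rfloor>) \<subseteq> {\<lfloor>(-B)/\<eta>\<rfloor>..\<lfloor>B/\<eta>\<rfloor>}"
    proof
      fix z assume "z \<in> range (\<lambda>x. \<lfloor>f x / \<eta>\<rfloor>)"
      then obtain x where z: "z = \<lfloor>f x / \<eta>\<rfloor>" by auto
      have "-B \<le> f x" "f x \<le> B" using B[of x] by auto
      then have "(-B)/\<eta> \<le> f x/\<eta>" "f x/\<eta> \<le> B/\<eta>"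
        using eta divide_right_mono[of "-B" "f x" \<eta>] divide_right_mono[of "f x" B \<eta>] by auto
      then show "z \<in> {\<lfloor>(-B)/\<eta>\<rfloor>..\<lfloor>B/\<eta>\<rfloor>}" unfolding z by (auto intro: floor_mono)
    qed
    then show "finite (range (\<lambda>x. \<lfloor>f x / \<eta>\<rfloor>))" by (rule finite_subset) simp
  qed
  define Cs where "Cs = range c"
  have finCs: "finite Cs"
  proof (rule finite_subset)
    show "Cs \<subseteq> {xs. set xs \<subseteq> S \<and> length xs = length fs}"
      unfolding Cs_def c_def S_def by fastforce
  qed (rule finite_lists_length_eq[OF finS])
  define P where "P l = {x. c x = l}" for l
  have measP: "P l \<in> sets \<mu>" for l
  proof -
    have meas_fl: "(\<lambda>x. \<lfloor>f x / \<eta>\<rfloor>) \<in> measurable borel (count_space UNIV)" if "f \<in> set fs" for f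
    proof -
      have "f \<in> borel_measurable borel" using fs[OF that] borel_measurable_continuous_onI by blast
      then have "(\<lambda>x. f x / \<eta>) \<in> borel_measurable borel"
        by (rule borel_measurable_divide) simp
      from measurable_comp[OF this measurable_real_floor] show ?thesis by (simp add: comp_def)
    qed
    have "c \<in> measurable borel (count_space UNIV)"
      unfolding c_def using meas_fl
    proof (induction fs)
      case Nil then show ?case by simp
    next
      case (Cons a fs)
      have 1: "(\<lambda>x. \<lfloor>a x / \<eta>\<rfloor>) \<in> measurable borel (count_space UNIV)" using Cons.prems by simp
      have 2: "(\<lambda>x. map (\<lambda>f. \<lfloor>f x / \<eta>\<rfloor>) fs) \<in> measurable borel (count_space UNIV)"
        using Cons by simp
      have "(\<lambda>x. (\<lfloor>a x / \<eta>\<rfloor>, map (\<lambda>f. \<lfloor>f x / \<eta>\<rfloor>) fs)) \<in> measurable borel (count_space UNIV \<Otimes>\<^sub>M count_space UNIV)"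
        using 1 2 by measurable
      then have "(\<lambda>x. (\<lfloor>a x / \<eta>\<rfloor>, map (\<lambda>f. \<lfloor>f x / \<eta>\<rfloor>) fs)) \<in> measurable borel (count_space UNIV)"
        by (simp add: pair_measure_countable)
      moreover have "(\<lambda>p::int \<times> int list. fst p # snd p) \<in> measurable (count_space UNIV) (count_space UNIV)"
        by simp
      ultimately have "(\<lambda>x. fst (\<lfloor>a x / \<eta>\<rfloor>, map (\<lambda>f. \<lfloor>f x / \<eta>\<rfloor>) fs) # snd (\<lfloor>a x / \<eta>\<rfloor>, map (\<lambda>f. \<lfloor>f x / \<eta>\<rfloor>) fs))
         \<in> measurable borel (count_space UNIV)"
        by (rule measurable_compose)
      then show ?case by simp
    qed
    then have "c -` {l} \<inter> space borel \<in> sets borel" by (rule measurable_sets) simp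
    then show ?thesis unfolding P_def using prob_measuresD(1)[OF mu] by (simp add: vimage_def)
  qed
  define w where "w l = measure \<mu> (P l)" for l
  define y where "y l = (SOME x. c x = l)" for l
  have yP: "c (y l) = l" if "l \<in> Cs" for l
    using that unfolding Cs_def y_def by (auto intro: someI)
  have decomp: "integral\<^sup>L \<mu> g = (\<Sum>l\<in>Cs. integral\<^sup>L \<mu> (\<lambda>x. g x * indicator (P l) x))"
    if gi: "integrable \<mu> g" for g :: "'a \<Rightarrow> real"
  proof -
    have "\<And>x. g x = (\<Sum>l\<in>Cs. g x * indicator (P l) x)"
    proof -
      fix x
      have "(\<Sum>l\<in>Cs. g x * indicator (P l) x) = (\<Sum>l\<in>{c x}. g x * indicator (P l) x)"
        using finCs by (intro sum.mono_neutral_right) (auto simp: Cs_def P_def indicator_def)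
      then show "g x = (\<Sum>l\<in>Cs. g x * indicator (P l) x)" by (simp add: P_def)
    qed
    then have "integral\<^sup>L \<mu> g = integral\<^sup>L \<mu> (\<lambda>x. \<Sum>l\<in>Cs. g x * indicator (P l) x)" by simp
    also have "\<dots> = (\<Sum>l\<in>Cs. integral\<^sup>L \<mu> (\<lambda>x. g x * indicator (P l) x))"
      by (rule Bochner_Integration.integral_sum) (use gi measP in \<open>auto intro: integrable_real_mult_indicator\<close>)
    finally show ?thesis .
  qed
  have sumw: "(\<Sum>l\<in>Cs. w l) = 1"
  proof -
    have "1 = integral\<^sup>L \<mu> (\<lambda>x. 1::real)" using prob_space by simp
    also have "\<dots> = (\<Sum>l\<in>Cs. integral\<^sup>L \<mu> (\<lambda>x. 1 * indicator (P l) x))"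
      by (rule decomp) simp
    also have "\<dots> = (\<Sum>l\<in>Cs. w l)" using sp by (simp add: w_def)
    finally show ?thesis by simp
  qed
  have cell: "\<bar>w l * f (y l) - integral\<^sup>L \<mu> (\<lambda>x. f x * indicator (P l) x)\<bar> \<le> \<eta> * w l"
    if f: "f \<in> set fs" and l: "l \<in> Cs" for f l
  proof -
    have fi: "integrable \<mu> f" using fs[OF f] integrable_bc[OF mu] by blast
    have close: "\<bar>f x - f (y l)\<bar> < \<eta>" if "x \<in> P l" for x
    proof -
      have "c x = c (y l)" using that yP[OF l] by (simp add: P_def)
      then have "\<lfloor>f x / \<eta>\<rfloor> = \<lfloor>f (y l) / \<eta>\<rfloor>" using f unfolding c_def by (simp add: map_eq_conv)
      then show ?thesis by (rule floor_eq_close[OF eta])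
    qed
    have iP: "integrable \<mu> (indicator (P l) :: 'a \<Rightarrow> real)"
      using measP by (intro integrable_real_indicator) (auto simp: emeasure_eq_measure)
    have i1: "integrable \<mu> (\<lambda>x. f x * indicator (P l) x)" by (rule integrable_real_mult_indicator[OF measP fi])
    have i2: "integrable \<mu> (\<lambda>x. f (y l) * indicator (P l) x)" using iP by simp
    have "w l * f (y l) = integral\<^sup>L \<mu> (\<lambda>x. f (y l) * indicator (P l) x)"
      using sp by (simp add: w_def)
    moreover have "integral\<^sup>L \<mu> (\<lambda>x. (f (y l) - f x) * indicator (P l) x)
       = integral\<^sup>L \<mu> (\<lambda>x. f (y l) * indicator (P l) x) - integral\<^sup>L \<mu> (\<lambda>x. f x * indicator (P l) x)"
      unfolding left_diff_distrib by (rule Bochner_Integration.integral_diff[OF i2 i1])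
    ultimately have "\<bar>w l * f (y l) - integral\<^sup>L \<mu> (\<lambda>x. f x * indicator (P l) x)\<bar>
        = \<bar>integral\<^sup>L \<mu> (\<lambda>x. (f (y l) - f x) * indicator (P l) x)\<bar>"
      using sp by (simp add: w_def mult.commute)
    also have "\<dots> \<le> integral\<^sup>L \<mu> (\<lambda>x. norm ((f (y l) - f x) * indicator (P l) x))"
      using integral_norm_bound by (metis real_norm_def)
    also have "\<dots> \<le> integral\<^sup>L \<mu> (\<lambda>x. \<eta> * indicator (P l) x)"
    proof (rule integral_mono)
      show "integrable \<mu> (\<lambda>x. norm ((f (y l) - f x) * indicator (P l) x))" using i1 i2
        by (intro integrable_norm) (simp add: left_diff_distrib)
      show "integrable \<mu> (\<lambda>x. \<eta> * indicator (P l) x)" using iP by simp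
      fix x show "norm ((f (y l) - f x) * indicator (P l) x) \<le> \<eta> * indicator (P l) x"
        using close[of x] eta by (auto simp: indicator_def abs_minus_commute)
    qed
    also have "\<dots> = \<eta> * w l" using sp by (simp add: w_def)
    finally show ?thesis .
  qed
  show ?thesis
  proof (intro exI conjI ballI)
    show "finite Cs" by (rule finCs)
    show "0 \<le> w l" for l by (simp add: w_def)
    show "(\<Sum>l\<in>Cs. w l) = 1" by (rule sumw)
    fix f assume f: "f \<in> set fs"
    have fi: "integrable \<mu> f" using fs[OF f] integrable_bc[OF mu] by blast
    have "\<bar>(\<Sum>l\<in>Cs. w l * f (y l)) - integral\<^sup>L \<mu> f\<bar>
       = \<bar>\<Sum>l\<in>Cs. (w l * f (y l) - integral\<^sup>L \<mu> (\<lambda>x. f x * indicator (P l) x))\<bar>"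
      using decomp[OF fi] by (simp add: sum_subtractf)
    also have "\<dots> \<le> (\<Sum>l\<in>Cs. \<bar>w l * f (y l) - integral\<^sup>L \<mu> (\<lambda>x. f x * indicator (P l) x)\<bar>)"
      by (rule sum_abs)
    also have "\<dots> \<le> (\<Sum>l\<in>Cs. \<eta> * w l)" by (intro sum_mono cell f)
    also have "\<dots> = \<eta>" using sumw by (simp add: sum_distrib_left[symmetric])
    finally show "\<bar>(\<Sum>l\<in>Cs. w l * f (y l)) - integral\<^sup>L \<mu> f\<bar> \<le> \<eta>" .
  qed
qed




lemma cont_open_vimage: "continuous_on UNIV f \<Longrightarrow> open B \<Longrightarrow> open (f -` B)"
  using continuous_on_open_vimage[of UNIV f] by auto

lemma cont_closed_vimage: "continuous_on UNIV f \<Longrightarrow> closed B \<Longrightarrow> closed (f -` B)"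
  using continuous_on_closed_vimage[of UNIV f] by auto

definition cnd :: "'a::topological_space set \<Rightarrow> bool" where
  "cnd F \<longleftrightarrow> closed F \<and> interior F = {}"

lemma cnd_Un: "cnd F \<Longrightarrow> cnd G \<Longrightarrow> cnd (F \<union> G)"
  unfolding cnd_def by (metis closed_Un interior_closed_Un_empty_interior)

lemma cnd_empty: "cnd {}" unfolding cnd_def by simp

lemma cnd_UN_finite: "finite I \<Longrightarrow> (\<And>i. i \<in> I \<Longrightarrow> cnd (F i)) \<Longrightarrow> cnd (\<Union>i\<in>I. F i)"
  by (induction I rule: finite_induct) (auto intro: cnd_Un cnd_empty)

lemma cnd_vimage_homeo:
  assumes "continuous_on UNIV h" "continuous_on UNIV h'" "\<And>x. h' (h x) = x" "\<And>x. h (h' x) = x"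
    and "cnd F"
  shows "cnd (h -` F)"
  unfolding cnd_def
proof
  show "closed (h -` F)" using assms(1,5) cont_closed_vimage unfolding cnd_def by blast
  show "interior (h -` F) = {}"
  proof (rule ccontr)
    assume "interior (h -` F) \<noteq> {}"
    then obtain x where "x \<in> interior (h -` F)" by auto
    then obtain U where U: "open U" "x \<in> U" "U \<subseteq> h -` F" by (meson interiorE)
    have "open (h' -` U)" using cont_open_vimage[OF assms(2) U(1)] .
    moreover have "h x \<in> h' -` U" using U(2) assms(3) by simp
    moreover have "h' -` U \<subseteq> F"
    proof
      fix y assume "y \<in> h' -` U"
      then have "h' y \<in> U" by simp
      then have "h (h' y) \<in> F" using U(3) by blast
      then show "y \<in> F" using assms(4) by simp
    qed
    ultimately have "h x \<in> interior F" by (meson interiorI)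
    then show False using assms(5) unfolding cnd_def by simp
  qed
qed

locale pgrp =
  fixes m :: "'a::polish_space \<Rightarrow> 'a \<Rightarrow> 'a" and e :: 'a and iv :: "'a \<Rightarrow> 'a"
  assumes pg: "polish_group m e iv"
begin

sublocale grp: group m e iv using pg unfolding polish_group_def by blast

lemma cont_m2: "continuous_on UNIV (\<lambda>p. m (fst p) (snd p))"
  using pg unfolding polish_group_def by blast

lemma cont_iv: "continuous_on UNIV iv"
  using pg unfolding polish_group_def by blast

lemma cont_m_comp:
  assumes "continuous_on UNIV f" "continuous_on UNIV g"
  shows "continuous_on UNIV (\<lambda>x. m (f x) (g x))"
proof -
  have "continuous_on UNIV (\<lambda>x. (f x, g x))" using assms by (rule continuous_on_Pair)
  then show ?thesis using continuous_on_compose2[OF cont_m2, of UNIV "\<lambda>x. (f x, g x)"] by simp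
qed

lemma cont_iv_comp: "continuous_on UNIV f \<Longrightarrow> continuous_on UNIV (\<lambda>x. iv (f x))"
  using continuous_on_compose2[OF cont_iv, of UNIV f] by simp

lemma cont_lmul: "continuous_on UNIV (\<lambda>x. m g x)"
  by (rule cont_m_comp) (auto intro: continuous_on_const continuous_on_id)

lemma cont_g: "continuous_on UNIV (\<lambda>p. m (iv (fst p)) (snd p))"
  by (intro cont_m_comp cont_iv_comp continuous_on_fst continuous_on_snd continuous_on_id)

lemma cnd_lmul_image: "cnd F \<Longrightarrow> cnd (m g ` F)"
proof -
  assume F: "cnd F"
  have "m g ` F = (\<lambda>x. m (iv g) x) -` F"
  proof (intro set_eqI iffI)
    fix x assume "x \<in> m g ` F"
    then obtain y where "y \<in> F" "x = m g y" by auto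
    then show "x \<in> (\<lambda>x. m (iv g) x) -` F" by (simp add: grp.assoc[symmetric])
  next
    fix x assume "x \<in> (\<lambda>x. m (iv g) x) -` F"
    then have "m (iv g) x \<in> F" by simp
    moreover have "x = m g (m (iv g) x)" by (simp add: grp.assoc[symmetric])
    ultimately show "x \<in> m g ` F" by blast
  qed
  moreover have "cnd ((\<lambda>x. m (iv g) x) -` F)"
    by (rule cnd_vimage_homeo[OF cont_lmul[of "iv g"] cont_lmul[of g] _ _ F]) (simp_all add: grp.assoc[symmetric])
  ultimately show ?thesis by simp
qed

lemma cnd_iv_image: "cnd F \<Longrightarrow> cnd (iv ` F)"
proof -
  assume F: "cnd F"
  have "iv ` F = iv -` F"
    by (auto simp: image_iff) (metis grp.inverse_inverse)
  moreover have "cnd (iv -` F)"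
    by (rule cnd_vimage_homeo[OF cont_iv cont_iv _ _ F]) simp_all
  ultimately show ?thesis by simp
qed

lemma no_isolated:
  assumes "cnd F" "e \<in> F"
  shows "\<not> open {x::'a}"
proof
  assume "open {x}"
  then have "open ((\<lambda>y. m x y) -` {x})" by (rule cont_open_vimage[OF cont_lmul])
  moreover have "(\<lambda>y. m x y) -` {x} = {e}"
    using grp.left_cancel[of x _ e] by auto
  ultimately have "open {e}" by simp
  moreover have "{e} \<subseteq> F" using assms(2) by simp
  ultimately have "e \<in> interior F" by (meson interiorI singletonI)
  then show False using assms(1) unfolding cnd_def by simp
qed

lemma cnd_singleton:
  assumes "cnd F" "e \<in> F"
  shows "cnd {x::'a}"
  unfolding cnd_def
proof
  show "closed {x}" by simp
  show "interior {x} = {}"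
  proof (rule ccontr)
    assume "interior {x} \<noteq> {}"
    then have "interior {x} = {x}" using interior_subset[of "{x}"] by blast
    then have "open {x}" by (metis open_interior)
    then show False using no_isolated[OF assms] by simp
  qed
qed

lemma open_not_cnd: "open U \<Longrightarrow> U \<noteq> {} \<Longrightarrow> cnd S \<Longrightarrow> \<exists>x\<in>U. x \<notin> S"
proof -
  assume "open U" "U \<noteq> {}" "cnd S"
  show ?thesis
  proof (rule ccontr)
    assume "\<not> (\<exists>x\<in>U. x \<notin> S)"
    then have "U \<subseteq> S" by blast
    then have "U \<subseteq> interior S" using \<open>open U\<close> by (rule interior_maximal)
    then show False using \<open>U \<noteq> {}\<close> \<open>cnd S\<close> unfolding cnd_def by blast
  qed
qed

lemma choose_points:
  assumes "finite I" "\<And>i. i \<in> I \<Longrightarrow> open (Op i) \<and> Op i \<noteq> {}" "cnd F" "e \<in> F"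
  shows "\<exists>z. \<forall>i\<in>I. z i \<in> Op i \<and> (\<forall>j\<in>I. i \<noteq> j \<longrightarrow> z i \<noteq> z j \<and> m (iv (z i)) (z j) \<notin> F)"
  using assms(1,2)
proof (induction I rule: finite_induct)
  case empty then show ?case by simp
next
  case (insert a I)
  then obtain z where z: "\<forall>i\<in>I. z i \<in> Op i \<and> (\<forall>j\<in>I. i \<noteq> j \<longrightarrow> z i \<noteq> z j \<and> m (iv (z i)) (z j) \<notin> F)"
    by blast
  define S where "S = (\<Union>i\<in>I. {z i} \<union> m (z i) ` F \<union> m (z i) ` (iv ` F))"
  have "cnd S" unfolding S_def
    using insert(1) assms(3,4)
    by (intro cnd_UN_finite cnd_Un cnd_singleton cnd_lmul_image cnd_iv_image) auto
  then obtain x where x: "x \<in> Op a" "x \<notin> S" using open_not_cnd insert(4)[of a] by blast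
  define z' where "z' = z(a := x)"
  have key: "x \<noteq> z i \<and> m (iv x) (z i) \<notin> F \<and> m (iv (z i)) x \<notin> F" if "i \<in> I" for i
  proof (intro conjI)
    show "x \<noteq> z i" using x(2) that unfolding S_def by blast
    show "m (iv (z i)) x \<notin> F"
    proof
      assume "m (iv (z i)) x \<in> F"
      moreover have "x = m (z i) (m (iv (z i)) x)" by (simp add: grp.assoc[symmetric])
      ultimately have "x \<in> m (z i) ` F" by blast
      then show False using x(2) that unfolding S_def by blast
    qed
    show "m (iv x) (z i) \<notin> F"
    proof
      assume "m (iv x) (z i) \<in> F"
      then have "iv (m (iv x) (z i)) \<in> iv ` F" by blast
      moreover have "iv (m (iv x) (z i)) = m (iv (z i)) x" by (simp add: grp.inverse_distrib_swap)
      ultimately have "m (iv (z i)) x \<in> iv ` F" by simp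
      moreover have "x = m (z i) (m (iv (z i)) x)" by (simp add: grp.assoc[symmetric])
      ultimately have "x \<in> m (z i) ` (iv ` F)" by blast
      then show False using x(2) that unfolding S_def by blast
    qed
  qed
  show ?case
  proof (intro exI[of _ z'] ballI conjI impI)
    fix i assume i: "i \<in> insert a I"
    show "z' i \<in> Op i" using i z x(1) insert(2) by (auto simp: z'_def)
    fix j assume j: "j \<in> insert a I" and ij: "i \<noteq> j"
    show "z' i \<noteq> z' j" using i j ij z key insert(2) by (auto simp: z'_def)
    show "m (iv (z' i)) (z' j) \<notin> F" using i j ij z key insert(2) by (auto simp: z'_def)
  qed
qed

end




lemma finite_min_radius:
  assumes "finite S" "\<And>s. s \<in> S \<Longrightarrow> \<exists>r>0. P s (r::real)"
    and "\<And>s r r'. P s r \<Longrightarrow> 0 < r' \<Longrightarrow> r' \<le> r \<Longrightarrow> P s r'"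
  shows "\<exists>r>0. \<forall>s\<in>S. P s r"
  using assms(1,2)
proof (induction S rule: finite_induct)
  case empty then show ?case by (intro exI[of _ 1]) simp
next
  case (insert a S)
  then obtain r where r: "r > 0" "\<forall>s\<in>S. P s r" by blast
  obtain r' where r': "r' > 0" "P a r'" using insert(4)[of a] by blast
  show ?case
  proof (intro exI[of _ "min r r'"] conjI ballI)
    show "0 < min r r'" using r r' by simp
    fix s assume "s \<in> insert a S"
    then show "P s (min r r')"
      using r r' assms(3)[of a r' "min r r'"] assms(3)[of s r "min r r'"] by auto
  qed
qed

context pgrp
begin

lemma radius_pair:
  assumes "closed F" "a \<noteq> b" "m (iv a) b \<notin> F"
  shows "\<exists>r>0. 2 * r \<le> dist a b \<and> (\<forall>x y. dist x a < r \<longrightarrow> dist y b < r \<longrightarrow> m (iv x) y \<notin> F)"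
proof -
  let ?g = "\<lambda>p. m (iv (fst p)) (snd p)"
  have "open (?g -` (- F))" using cont_open_vimage[OF cont_g] assms(1) by blast
  moreover have "(a, b) \<in> ?g -` (- F)" using assms(3) by simp
  ultimately obtain d where d: "d > 0" "ball (a, b) d \<subseteq> ?g -` (- F)"
    by (meson open_contains_ball)
  define r where "r = min (d / 2) (dist a b / 2)"
  have "dist a b > 0" using assms(2) by simp
  then have r0: "r > 0" using d(1) by (simp add: r_def)
  show ?thesis
  proof (intro exI[of _ r] conjI allI impI r0)
    show "2 * r \<le> dist a b" by (simp add: r_def)
    fix x y assume xy: "dist x a < r" "dist y b < r"
    have "dist (x, y) (a, b) = sqrt ((dist x a)\<^sup>2 + (dist y b)\<^sup>2)" by (simp add: dist_Pair_Pair)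
    also have "\<dots> \<le> dist x a + dist y b" by (rule sqrt_sum_squares_le_sum) simp_all
    also have "\<dots> < d" using xy by (simp add: r_def)
    finally have "(x, y) \<in> ball (a, b) d" by (simp add: dist_commute)
    then show "m (iv x) y \<notin> F" using d(2) by auto
  qed
qed

lemma radius:
  assumes "finite I" "closed F"
    and "\<forall>i\<in>I. \<forall>j\<in>I. i \<noteq> j \<longrightarrow> z i \<noteq> z j \<and> m (iv (z i)) (z j) \<notin> F"
  shows "\<exists>r>0. \<forall>i\<in>I. \<forall>j\<in>I. i \<noteq> j \<longrightarrow> 2 * r \<le> dist (z i) (z j) \<and>
     (\<forall>x y. dist x (z i) < r \<longrightarrow> dist y (z j) < r \<longrightarrow> m (iv x) y \<notin> F)"
proof -
  let ?S = "{p \<in> I \<times> I. fst p \<noteq> snd p}"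
  let ?P = "\<lambda>p r. 2 * r \<le> dist (z (fst p)) (z (snd p)) \<and>
     (\<forall>x y. dist x (z (fst p)) < r \<longrightarrow> dist y (z (snd p)) < r \<longrightarrow> m (iv x) y \<notin> F)"
  have "\<exists>r>0. \<forall>p\<in>?S. ?P p r"
  proof (rule finite_min_radius)
    show "finite ?S" using assms(1) by simp
    show "\<exists>r>0. ?P p r" if "p \<in> ?S" for p
      using radius_pair[OF assms(2)] assms(3) that by auto
    show "?P p r'" if "?P p r" "0 < r'" "r' \<le> r" for p r r'
      using that by force
  qed
  then show ?thesis by auto
qed

end



definition bump :: "real \<Rightarrow> 'a::metric_space \<Rightarrow> 'a \<Rightarrow> real" where
  "bump r c x = max 0 (1 - dist x c / r)"

lemma bump_cont: "r > 0 \<Longrightarrow> continuous_on UNIV (bump r c)"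
  unfolding bump_def by (intro continuous_intros) auto

lemma bump_bounded: "r > 0 \<Longrightarrow> bounded (range (bump r c))"
  unfolding bump_def bounded_iff
  by (intro exI[of _ 1]) (auto simp: max_def)

lemma bump_le_ind: "r > 0 \<Longrightarrow> bump r c x \<le> indicator (ball c r) x"
  unfolding bump_def by (auto simp: indicator_def dist_commute not_less field_simps)

lemma bump_center: "r > 0 \<Longrightarrow> bump r c c = 1"
  unfolding bump_def by simp

lemma bump_far: "r > 0 \<Longrightarrow> r \<le> dist x c \<Longrightarrow> bump r c x = 0"
  unfolding bump_def by (auto simp: field_simps)

lemma sets_pair_P:
  assumes "\<nu> \<in> prob_measures"
  shows "sets (\<nu> \<Otimes>\<^sub>M \<nu>) = sets (borel :: ('a::second_countable_topology \<times> 'a) measure)"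
proof -
  have "sets (\<nu> \<Otimes>\<^sub>M \<nu>) = sets (borel \<Otimes>\<^sub>M (borel :: 'a measure))"
    using prob_measuresD(1)[OF assms] by (intro sets_pair_measure_cong) auto
  then show ?thesis by (metis borel_prod)
qed

lemma measure_pair_Times_P:
  assumes "\<nu> \<in> prob_measures" "A \<in> sets borel" "B \<in> sets borel"
  shows "measure (\<nu> \<Otimes>\<^sub>M \<nu>) (A \<times> B) = measure \<nu> A * measure \<nu> (B :: 'a::second_countable_topology set)"
proof -
  interpret prob_space \<nu> using prob_measuresD(2)[OF assms(1)] .
  have AB: "A \<in> sets \<nu>" "B \<in> sets \<nu>" using assms prob_measuresD(1)[OF assms(1)] by auto
  have "emeasure (\<nu> \<Otimes>\<^sub>M \<nu>) (A \<times> B) = emeasure \<nu> A * emeasure \<nu> B"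
    by (rule emeasure_pair_measure_Times[OF AB])
  then have "emeasure (\<nu> \<Otimes>\<^sub>M \<nu>) (A \<times> B) = ennreal (measure \<nu> A * measure \<nu> B)"
    by (simp add: emeasure_eq_measure ennreal_mult)
  then show ?thesis by (simp add: measure_def)
qed

lemma (in finite_measure) fm_subadd: "A \<in> sets M \<Longrightarrow> B \<in> sets M \<Longrightarrow> measure M (A \<union> B) \<le> measure M A + measure M B"
  by (rule measure_subadditive) auto

context pgrp
begin

definition Eset :: "'a set \<Rightarrow> real \<Rightarrow> 'a measure set" where
  "Eset F \<kappa> = {\<nu> \<in> prob_measures. \<exists>K. compact K \<and> \<kappa> \<le> measure \<nu> K \<and>
     (measure \<nu> K)\<^sup>2 / 2 \<le> measure (\<nu> \<Otimes>\<^sub>M \<nu>) {p \<in> K \<times> K. m (iv (fst p)) (snd p) \<in> F}}"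

lemma Eset_bound:
  fixes v :: "'i \<Rightarrow> real" and \<delta> \<kappa> r :: real
  assumes nu: "\<nu> \<in> prob_measures" and I: "finite I" "I \<noteq> {}" and r: "r > 0"
    and sep: "\<forall>i\<in>I. \<forall>j\<in>I. i \<noteq> j \<longrightarrow> 2 * r \<le> dist (z i) (z j) \<and>
     (\<forall>x y. dist x (z i) < r \<longrightarrow> dist y (z j) < r \<longrightarrow> m (iv x) y \<notin> F)"
    and v: "(\<Sum>i\<in>I. v i) = 1"
    and int: "\<And>i. i \<in> I \<Longrightarrow> v i - \<delta> < integral\<^sup>L \<nu> (bump r (z i))"
    and small: "\<And>i. i \<in> I \<Longrightarrow> v i + card I * \<delta> \<le> \<kappa> / 4" "2 * card I * \<delta> < \<kappa>\<^sup>2 / 4"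
    and dl: "\<delta> > 0" and kap: "\<kappa> > 0"
  shows "\<nu> \<notin> Eset F \<kappa>"
proof
  assume "\<nu> \<in> Eset F \<kappa>"
  then obtain K where K: "compact K" "\<kappa> \<le> measure \<nu> K"
    and Sbig: "(measure \<nu> K)\<^sup>2 / 2 \<le> measure (\<nu> \<Otimes>\<^sub>M \<nu>) {p \<in> K \<times> K. m (iv (fst p)) (snd p) \<in> F}"
    unfolding Eset_def by blast
  interpret prob_space \<nu> using prob_measuresD(2)[OF nu] .
  interpret N2: prob_space "\<nu> \<Otimes>\<^sub>M \<nu>" by (rule prob_space_pair) unfold_locales
  have sets_nu: "sets \<nu> = sets borel" using prob_measuresD(1)[OF nu] .
  have sp: "space \<nu> = UNIV" using prob_measuresD(3)[OF nu] .
  have borelI: "A \<in> sets \<nu>" if "A \<in> sets borel" for A using that sets_nu by simp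
  define W where "W i = ball (z i) r" for i
  have W_sets: "W i \<in> sets \<nu>" for i unfolding W_def by (intro borelI) simp
  have K_sets: "K \<in> sets \<nu>" using K(1) by (intro borelI borel_compact)
  have Wdisj: "W i \<inter> W j = {}" if "i \<in> I" "j \<in> I" "i \<noteq> j" for i j
  proof (rule ccontr)
    assume "W i \<inter> W j \<noteq> {}"
    then obtain x where "dist x (z i) < r" "dist x (z j) < r" unfolding W_def by (auto simp: dist_commute)
    then have "dist (z i) (z j) < 2 * r" using dist_triangle[of "z i" "z j" x] by (simp add: dist_commute)
    then show False using sep that by fastforce
  qed
  have WI: "measure \<nu> (W i) > v i - \<delta>" if "i \<in> I" for i
  proof -
    have "integral\<^sup>L \<nu> (bump r (z i)) \<le> integral\<^sup>L \<nu> (indicator (W i))"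
    proof (rule integral_mono)
      show "integrable \<nu> (bump r (z i))" by (rule integrable_bc[OF nu bump_cont[OF r] bump_bounded[OF r]])
      show "integrable \<nu> (indicator (W i) :: 'a \<Rightarrow> real)"
        using W_sets by (intro integrable_real_indicator) (auto simp: emeasure_eq_measure)
      show "bump r (z i) x \<le> indicator (W i) x" for x unfolding W_def by (rule bump_le_ind[OF r])
    qed
    then show ?thesis using int[OF that] sp by simp
  qed
  have sumW: "(\<Sum>i\<in>I. measure \<nu> (W i)) = measure \<nu> (\<Union>i\<in>I. W i)"
    using I(1) W_sets Wdisj by (intro finite_measure_finite_Union[symmetric]) (auto simp: disjoint_family_on_def)
  have sumW1: "(\<Sum>i\<in>I. measure \<nu> (W i)) \<le> 1" unfolding sumW by simp
  have sumW2: "(\<Sum>i\<in>I. measure \<nu> (W i)) > 1 - card I * \<delta>"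
  proof -
    have "(\<Sum>i\<in>I. v i - \<delta>) < (\<Sum>i\<in>I. measure \<nu> (W i))"
      using I WI by (intro sum_strict_mono) auto
    moreover have "(\<Sum>i\<in>I. v i - \<delta>) = 1 - card I * \<delta>" using v by (simp add: sum_subtractf)
    ultimately show ?thesis by simp
  qed
  have Wup: "measure \<nu> (W i) \<le> \<kappa> / 4" if i: "i \<in> I" for i
  proof -
    have e1: "(\<Sum>j\<in>I. measure \<nu> (W j)) = measure \<nu> (W i) + (\<Sum>j\<in>I - {i}. measure \<nu> (W j))"
      using I(1) i by (simp add: sum.remove)
    have e2: "(\<Sum>j\<in>I - {i}. v j - \<delta>) \<le> (\<Sum>j\<in>I - {i}. measure \<nu> (W j))"
      using WI by (intro sum_mono) (auto intro: less_imp_le)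
    have e3: "(\<Sum>j\<in>I - {i}. v j) = 1 - v i"
      using I(1) i v by (simp add: sum_diff1)
    have e4: "(\<Sum>j\<in>I - {i}. v j - \<delta>) = (\<Sum>j\<in>I - {i}. v j) - card (I - {i}) * \<delta>"
      by (simp add: sum_subtractf)
    have e5: "real (card (I - {i})) \<le> card I" using I(1) by (simp add: card_mono)
    have e6: "real (card (I - {i})) * \<delta> \<le> card I * \<delta>" using e5 dl by (simp add: mult_right_mono)
    have "measure \<nu> (W i) \<le> v i + card I * \<delta>" using e1 e2 e3 e4 e6 sumW1 by linarith
    then show ?thesis using small(1)[OF i] by simp
  qed
  define R where "R = space \<nu> - (\<Union>i\<in>I. W i)"
  have R_sets: "R \<in> sets \<nu>" unfolding R_def using I(1) W_sets by auto
  have R_small: "measure \<nu> R < card I * \<delta>"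
  proof -
    have "measure \<nu> R = 1 - measure \<nu> (\<Union>i\<in>I. W i)"
      unfolding R_def using I(1) W_sets by (intro prob_compl) auto
    then show ?thesis using sumW sumW2 by simp
  qed
  define S where "S = {p \<in> K \<times> K. m (iv (fst p)) (snd p) \<in> F}"
  have S_sub: "S \<subseteq> (\<Union>i\<in>I. (K \<inter> W i) \<times> (K \<inter> W i)) \<union> (R \<times> space \<nu>) \<union> (space \<nu> \<times> R)"
  proof
    fix p assume p: "p \<in> S"
    obtain x y where xy: "p = (x, y)" by (cases p)
    show "p \<in> (\<Union>i\<in>I. (K \<inter> W i) \<times> (K \<inter> W i)) \<union> (R \<times> space \<nu>) \<union> (space \<nu> \<times> R)"
    proof (cases "x \<in> R \<or> y \<in> R")
      case True then show ?thesis using xy sp by auto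
    next
      case False
      then obtain i j where ij: "i \<in> I" "j \<in> I" "x \<in> W i" "y \<in> W j" unfolding R_def sp by auto
      have "i = j"
      proof (rule ccontr)
        assume "i \<noteq> j"
        then have "m (iv x) y \<notin> F" using sep ij unfolding W_def by (auto simp: dist_commute)
        then show False using p xy unfolding S_def by simp
      qed
      then show ?thesis using ij p xy unfolding S_def by auto
    qed
  qed
  have KW_sets: "K \<inter> W i \<in> sets \<nu>" for i using K_sets W_sets by auto
  have T_sets: "A \<times> B \<in> sets (\<nu> \<Otimes>\<^sub>M \<nu>)" if "A \<in> sets \<nu>" "B \<in> sets \<nu>" for A B
    using that by (rule pair_measureI)
  have U_sets: "(\<Union>i\<in>I. (K \<inter> W i) \<times> (K \<inter> W i)) \<in> sets (\<nu> \<Otimes>\<^sub>M \<nu>)"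
    using I(1) KW_sets T_sets by (intro sets.finite_UN) auto
  have RU: "R \<times> space \<nu> \<in> sets (\<nu> \<Otimes>\<^sub>M \<nu>)" "space \<nu> \<times> R \<in> sets (\<nu> \<Otimes>\<^sub>M \<nu>)"
    using T_sets R_sets by auto
  have mT: "measure (\<nu> \<Otimes>\<^sub>M \<nu>) (A \<times> B) = measure \<nu> A * measure \<nu> B" if "A \<in> sets \<nu>" "B \<in> sets \<nu>" for A B
    using measure_pair_Times_P[OF nu] that sets_nu by simp
  have "measure (\<nu> \<Otimes>\<^sub>M \<nu>) S \<le> measure (\<nu> \<Otimes>\<^sub>M \<nu>)
      ((\<Union>i\<in>I. (K \<inter> W i) \<times> (K \<inter> W i)) \<union> (R \<times> space \<nu>) \<union> (space \<nu> \<times> R))"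
    using S_sub U_sets RU by (intro N2.finite_measure_mono) auto
  also have "\<dots> \<le> measure (\<nu> \<Otimes>\<^sub>M \<nu>) (\<Union>i\<in>I. (K \<inter> W i) \<times> (K \<inter> W i))
      + measure (\<nu> \<Otimes>\<^sub>M \<nu>) (R \<times> space \<nu>) + measure (\<nu> \<Otimes>\<^sub>M \<nu>) (space \<nu> \<times> R)"
    using N2.fm_subadd[OF sets.Un[OF U_sets RU(1)] RU(2)] N2.fm_subadd[OF U_sets RU(1)] by linarith
  also have "\<dots> \<le> (\<Sum>i\<in>I. measure \<nu> (K \<inter> W i) * measure \<nu> (K \<inter> W i)) + measure \<nu> R + measure \<nu> R"
  proof -
    have "measure (\<nu> \<Otimes>\<^sub>M \<nu>) (\<Union>i\<in>I. (K \<inter> W i) \<times> (K \<inter> W i))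
        \<le> (\<Sum>i\<in>I. measure (\<nu> \<Otimes>\<^sub>M \<nu>) ((K \<inter> W i) \<times> (K \<inter> W i)))"
      using I(1) KW_sets T_sets by (intro N2.finite_measure_subadditive_finite) auto
    also have "\<dots> = (\<Sum>i\<in>I. measure \<nu> (K \<inter> W i) * measure \<nu> (K \<inter> W i))"
      using KW_sets mT by simp
    finally show ?thesis using mT[OF R_sets sets.top] mT[OF sets.top R_sets] by (simp add: prob_space)
  qed
  also have "\<dots> \<le> (\<Sum>i\<in>I. \<kappa> / 4 * measure \<nu> (K \<inter> W i)) + measure \<nu> R + measure \<nu> R"
  proof -
    have "measure \<nu> (K \<inter> W i) * measure \<nu> (K \<inter> W i) \<le> \<kappa> / 4 * measure \<nu> (K \<inter> W i)" if "i \<in> I" for i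
    proof (rule mult_right_mono)
      show "measure \<nu> (K \<inter> W i) \<le> \<kappa> / 4"
        using finite_measure_mono[of "K \<inter> W i" "W i"] W_sets Wup[OF that] by auto
    qed simp
    then show ?thesis by (simp add: sum_mono)
  qed
  also have "\<dots> \<le> \<kappa> / 4 * measure \<nu> K + measure \<nu> R + measure \<nu> R"
  proof -
    have "(\<Sum>i\<in>I. measure \<nu> (K \<inter> W i)) = measure \<nu> (\<Union>i\<in>I. K \<inter> W i)"
      using I(1) KW_sets Wdisj by (intro finite_measure_finite_Union[symmetric]) (auto simp: disjoint_family_on_def)
    also have "\<dots> \<le> measure \<nu> K" using K_sets by (intro finite_measure_mono) auto
    finally have "\<kappa> / 4 * (\<Sum>i\<in>I. measure \<nu> (K \<inter> W i)) \<le> \<kappa> / 4 * measure \<nu> K"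
      using kap by (intro mult_left_mono) auto
    then have "(\<Sum>i\<in>I. \<kappa> / 4 * measure \<nu> (K \<inter> W i)) \<le> \<kappa> / 4 * measure \<nu> K"
      by (simp only: sum_distrib_left)
    then show ?thesis by simp
  qed
  also have "\<dots> < (measure \<nu> K)\<^sup>2 / 2"
  proof -
    have a: "\<kappa> / 4 * measure \<nu> K \<le> measure \<nu> K * measure \<nu> K / 4"
      using K(2) by (simp add: mult_right_mono)
    have b: "\<kappa>\<^sup>2 \<le> (measure \<nu> K)\<^sup>2" using K(2) kap by (simp add: power_mono)
    have c: "2 * measure \<nu> R < 2 * card I * \<delta>" using R_small by simp
    show ?thesis using a b c small(2) by (simp add: power2_eq_square)
  qed
  finally show False using Sbig unfolding S_def by simp
qed

end



lemma openin_wnbhd: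
  assumes "good_list L"
  shows "openin weak_star_topology (wnbhd \<mu> L)"
  using assms
proof (induction L)
  case Nil
  then show ?case by (simp add: wnbhd_def openin_weak_P)
next
  case (Cons a L)
  obtain f \<epsilon> where a: "a = (f, \<epsilon>)" by (cases a)
  have gl: "good_list L" using Cons.prems by (simp add: good_list_def)
  have f: "continuous_on UNIV f" "bounded (range f)" using Cons.prems a by (auto simp: good_list_def)
  have "wnbhd \<mu> (a # L) = {M \<in> prob_measures. integral\<^sup>L M f \<in> ball (integral\<^sup>L \<mu> f) \<epsilon>} \<inter> wnbhd \<mu> L"
    unfolding wnbhd_def a by (auto simp: dist_real_def abs_minus_commute)
  then show ?case using openin_Int[OF openin_weak_gen[OF f open_ball] Cons.IH[OF gl]] by simp
qed

lemma openin_INT_finite: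
  assumes "finite I" "\<And>i. i \<in> I \<Longrightarrow> openin X (G i)"
  shows "openin X (topspace X \<inter> (\<Inter>i\<in>I. G i))"
  using assms
proof (induction I rule: finite_induct)
  case empty then show ?case by simp
next
  case (insert a I)
  have "topspace X \<inter> (\<Inter>i\<in>insert a I. G i) = G a \<inter> (topspace X \<inter> (\<Inter>i\<in>I. G i))" by auto
  then show ?case using insert by (simp add: openin_Int)
qed

context pgrp
begin

lemma Eset_nowhere_dense:
  assumes F: "cnd F" "e \<in> F" and kap: "\<kappa> > 0"
  shows "nowhere_dense_in weak_star_topology (Eset F \<kappa>)"
proof (rule nowhere_dense_local)
  show "Eset F \<kappa> \<subseteq> topspace weak_star_topology" unfolding Eset_def topspace_weak by blast
  fix U and \<mu>0 :: "'a measure" assume U: "openin weak_star_topology U" and mu0U: "\<mu>0 \<in> U"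
  have mu0: "\<mu>0 \<in> prob_measures" using openin_subset[OF U] mu0U topspace_weak by auto
  obtain L where L: "good_list L" "wnbhd \<mu>0 L \<subseteq> U" using weak_open_nbhd[OF U mu0U] by blast
  define \<eta> where "\<eta> = (if L = [] then 1 else Min (snd ` set L)) / 3"
  have eta: "\<eta> > 0" "\<And>f \<epsilon>. (f, \<epsilon>) \<in> set L \<Longrightarrow> 2 * \<eta> < \<epsilon>"
  proof -
    have pos: "\<And>p. p \<in> set L \<Longrightarrow> snd p > 0" using L(1) by (auto simp: good_list_def)
    show "\<eta> > 0"
    proof (cases "L = []")
      case False
      then have "Min (snd ` set L) \<in> snd ` set L" by (intro Min_in) auto
      then show ?thesis using pos False by (auto simp: \<eta>_def)
    qed (simp add: \<eta>_def)
    fix f \<epsilon> assume fe: "(f, \<epsilon>) \<in> set L"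
    then have "L \<noteq> []" by auto
    moreover have "Min (snd ` set L) \<le> \<epsilon>" using fe by (intro Min_le) force+
    moreover have "Min (snd ` set L) > 0"
    proof -
      have "Min (snd ` set L) \<in> snd ` set L" using \<open>L \<noteq> []\<close> by (intro Min_in) auto
      then show ?thesis using pos by auto
    qed
    ultimately have "2 * (Min (snd ` set L) / 3) < \<epsilon>" by linarith
    then show "2 * \<eta> < \<epsilon>" using \<open>L \<noteq> []\<close> by (simp add: \<eta>_def)
  qed
  define fs where "fs = map fst L"
  have fs: "\<And>f. f \<in> set fs \<Longrightarrow> continuous_on UNIV f \<and> bounded (range f)"
    using L(1) unfolding fs_def good_list_def by auto
  have exC: "\<exists>(Cs :: int list set) w y. finite Cs \<and> (\<forall>l\<in>Cs. w l \<ge> 0) \<and> (\<Sum>l\<in>Cs. w l) = 1 \<and>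
     (\<forall>f\<in>set fs. \<bar>(\<Sum>l\<in>Cs. w l * f (y l)) - integral\<^sup>L \<mu>0 f\<bar> \<le> \<eta>)"
    by (rule approx_cells[OF mu0 _ eta(1)]) (erule fs)
  from exC obtain Cs :: "int list set" and w y where
    CsA: "finite Cs \<and> (\<forall>l\<in>Cs. w l \<ge> 0) \<and> (\<Sum>l\<in>Cs. w l) = 1 \<and>
      (\<forall>f\<in>set fs. \<bar>(\<Sum>l\<in>Cs. w l * f (y l)) - integral\<^sup>L \<mu>0 f\<bar> \<le> \<eta>)"
    by (elim exE)
  have Cs: "finite Cs" "\<forall>l\<in>Cs. w l \<ge> 0" "(\<Sum>l\<in>Cs. w l) = 1" using CsA by simp_all
  have approx: "\<forall>f\<in>set fs. \<bar>(\<Sum>l\<in>Cs. w l * f (y l)) - integral\<^sup>L \<mu>0 f\<bar> \<le> \<eta>"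
    using CsA by simp
  define M :: nat where "M = nat \<lceil>8 / \<kappa>\<rceil> + 1"
  have M0: "M > 0" by (simp add: M_def)
  have M8: "1 / real M \<le> \<kappa> / 8"
  proof -
    have "8 / \<kappa> \<le> real M" unfolding M_def by linarith
    then show ?thesis using kap M0 by (simp add: field_simps)
  qed
  define I where "I = Cs \<times> {..<M}"
  define v where "v i = w (fst i) / real M" for i :: "int list \<times> nat"
  have Cs_ne: "Cs \<noteq> {}" using Cs(3) by auto
  have I: "finite I" "I \<noteq> {}" using Cs(1) Cs_ne M0 by (auto simp: I_def)
  have cardI: "card I > 0" using I by (simp add: card_gt_0_iff)
  have v_nn: "\<And>i. i \<in> I \<Longrightarrow> v i \<ge> 0" using Cs(2) by (auto simp: v_def I_def)
  have sum_split: "(\<Sum>i\<in>I. v i * g (fst i)) = (\<Sum>l\<in>Cs. w l * g l)" for g :: "int list \<Rightarrow> real"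
  proof -
    have "(\<Sum>i\<in>I. v i * g (fst i)) = (\<Sum>i\<in>Cs \<times> {..<M}. case i of (l, t) \<Rightarrow> w l / real M * g l)"
      unfolding I_def v_def by (intro sum.cong) auto
    also have "\<dots> = (\<Sum>l\<in>Cs. \<Sum>t\<in>{..<M}. w l / real M * g l)"
      by (rule sum.cartesian_product[symmetric])
    also have "\<dots> = (\<Sum>l\<in>Cs. w l * g l)" using M0 by simp
    finally show ?thesis .
  qed
  have v_sum: "(\<Sum>i\<in>I. v i) = 1" using sum_split[of "\<lambda>_. 1"] Cs(3) by simp
  have v_small: "\<And>i. i \<in> I \<Longrightarrow> v i \<le> \<kappa> / 8"
  proof -
    fix i assume i: "i \<in> I"
    have "w (fst i) \<le> (\<Sum>l\<in>Cs. w l)" using i Cs(1,2) by (intro member_le_sum) (auto simp: I_def)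
    then have "w (fst i) \<le> 1" using Cs(3) by simp
    then have "v i \<le> 1 / real M" unfolding v_def using M0 by (simp add: divide_right_mono)
    then show "v i \<le> \<kappa> / 8" using M8 by simp
  qed
  define Op where "Op i = (\<Inter>f\<in>set fs. f -` ball (f (y (fst i))) \<eta>)" for i :: "int list \<times> nat"
  have Op: "open (Op i) \<and> Op i \<noteq> {}" for i
  proof
    show "open (Op i)" unfolding Op_def using fs by (intro open_INT) (auto intro: cont_open_vimage)
    have "y (fst i) \<in> Op i" unfolding Op_def using eta(1) by auto
    then show "Op i \<noteq> {}" by auto
  qed
  have OpI: "\<And>i. i \<in> I \<Longrightarrow> open (Op i) \<and> Op i \<noteq> {}" using Op by blast
  have exZ: "\<exists>z. \<forall>i\<in>I. z i \<in> Op i \<and> (\<forall>j\<in>I. i \<noteq> j \<longrightarrow> z i \<noteq> z j \<and> m (iv (z i)) (z j) \<notin> F)"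
    by (rule choose_points[OF I(1) _ F]) (erule OpI)
  from exZ obtain z where
    z: "\<forall>i\<in>I. z i \<in> Op i \<and> (\<forall>j\<in>I. i \<noteq> j \<longrightarrow> z i \<noteq> z j \<and> m (iv (z i)) (z j) \<notin> F)"
    by (elim exE)
  have Fc: "closed F" using F(1) unfolding cnd_def by simp
  have zsep: "\<forall>i\<in>I. \<forall>j\<in>I. i \<noteq> j \<longrightarrow> z i \<noteq> z j \<and> m (iv (z i)) (z j) \<notin> F"
    using z by simp
  from radius[OF I(1) Fc zsep] obtain r where rA: "r > 0 \<and> (\<forall>i\<in>I. \<forall>j\<in>I. i \<noteq> j \<longrightarrow> 2 * r \<le> dist (z i) (z j) \<and>
     (\<forall>x y. dist x (z i) < r \<longrightarrow> dist y (z j) < r \<longrightarrow> m (iv x) y \<notin> F))"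
    by (elim exE)
  have r: "r > 0" using rA by simp
  have sep: "\<forall>i\<in>I. \<forall>j\<in>I. i \<noteq> j \<longrightarrow> 2 * r \<le> dist (z i) (z j) \<and>
     (\<forall>x y. dist x (z i) < r \<longrightarrow> dist y (z j) < r \<longrightarrow> m (iv x) y \<notin> F)" using rA by simp
  define \<delta> where "\<delta> = min (\<kappa> / (8 * card I)) (\<kappa>\<^sup>2 / (16 * card I))"
  have dl: "\<delta> > 0" using kap cardI by (simp add: \<delta>_def)
  have d1: "card I * \<delta> \<le> \<kappa> / 8"
  proof -
    have "card I * \<delta> \<le> card I * (\<kappa> / (8 * card I))" using cardI by (intro mult_left_mono) (auto simp: \<delta>_def)
    then show ?thesis using cardI by simp
  qed
  have d2: "2 * card I * \<delta> < \<kappa>\<^sup>2 / 4"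
  proof -
    have "card I * \<delta> \<le> card I * (\<kappa>\<^sup>2 / (16 * card I))" using cardI by (intro mult_left_mono) (auto simp: \<delta>_def)
    then have "card I * \<delta> \<le> \<kappa>\<^sup>2 / 16" using cardI by simp
    moreover have "\<kappa>\<^sup>2 > 0" using kap by simp
    ultimately show ?thesis by linarith
  qed
  define \<mu>' where "\<mu>' = dmeas I v z"
  define V where "V = wnbhd \<mu>0 L \<inter> (topspace weak_star_topology \<inter>
     (\<Inter>i\<in>I. {\<nu> \<in> prob_measures. integral\<^sup>L \<nu> (bump r (z i)) \<in> {v i - \<delta><..}}))"
  have int_mu': "integral\<^sup>L \<mu>' f = (\<Sum>i\<in>I. v i * f (z i))" if "continuous_on UNIV f" for f :: "'a \<Rightarrow> real"
    unfolding \<mu>'_def by (rule dmeas_integral[OF I(1) v_nn v_sum borel_measurable_continuous_onI[OF that]])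
  show "\<exists>V y. openin weak_star_topology V \<and> y \<in> V \<and> V \<subseteq> U \<and> V \<inter> Eset F \<kappa> = {}"
  proof (intro exI conjI)
    show "openin weak_star_topology V" unfolding V_def
      by (intro openin_Int openin_wnbhd[OF L(1)] openin_INT_finite[OF I(1)] openin_weak_gen
          bump_cont bump_bounded r open_greaterThan)
    show "V \<subseteq> U" unfolding V_def using L(2) by blast
    show "\<mu>' \<in> V" unfolding V_def
    proof (intro IntI)
      show "\<mu>' \<in> topspace weak_star_topology" unfolding \<mu>'_def topspace_weak by (rule dmeas_prob)
      show "\<mu>' \<in> (\<Inter>i\<in>I. {\<nu> \<in> prob_measures. integral\<^sup>L \<nu> (bump r (z i)) \<in> {v i - \<delta><..}})"
      proof (intro INT_I CollectI conjI)
        fix i assume i: "i \<in> I"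
        show "\<mu>' \<in> prob_measures" unfolding \<mu>'_def by (rule dmeas_prob)
        have "integral\<^sup>L \<mu>' (bump r (z i)) = (\<Sum>j\<in>I. v j * bump r (z i) (z j))"
          by (rule int_mu'[OF bump_cont[OF r]])
        also have "\<dots> = (\<Sum>j\<in>{i}. v j * bump r (z i) (z j))"
        proof (rule sum.mono_neutral_right)
          show "finite I" by (rule I(1))
          show "{i} \<subseteq> I" using i by simp
          show "\<forall>j\<in>I - {i}. v j * bump r (z i) (z j) = 0"
          proof
            fix j assume j: "j \<in> I - {i}"
            then have "2 * r \<le> dist (z i) (z j)" using sep i by auto
            then have "r \<le> dist (z j) (z i)" using r by (simp add: dist_commute)
            then show "v j * bump r (z i) (z j) = 0" using bump_far[OF r, of "z j" "z i"] by simp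
          qed
        qed
        also have "\<dots> = v i" using bump_center[OF r, of "z i"] by simp
        finally show "integral\<^sup>L \<mu>' (bump r (z i)) \<in> {v i - \<delta><..}" using dl by simp
      qed
      show "\<mu>' \<in> wnbhd \<mu>0 L" unfolding wnbhd_def
      proof (intro CollectI conjI ballI)
        show "\<mu>' \<in> prob_measures" unfolding \<mu>'_def by (rule dmeas_prob)
        fix p assume p: "p \<in> set L"
        obtain f \<epsilon> where fe: "p = (f, \<epsilon>)" by (cases p)
        have ffs: "f \<in> set fs" using p fe unfolding fs_def by force
        have close: "\<bar>f (z i) - f (y (fst i))\<bar> < \<eta>" if "i \<in> I" for i
          using z that ffs unfolding Op_def by (auto simp: dist_real_def abs_minus_commute)
        have "\<bar>integral\<^sup>L \<mu>' f - (\<Sum>l\<in>Cs. w l * f (y l))\<bar>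
            = \<bar>(\<Sum>i\<in>I. v i * f (z i)) - (\<Sum>i\<in>I. v i * f (y (fst i)))\<bar>"
          using int_mu'[of f] fs[OF ffs] sum_split[of "\<lambda>l. f (y l)"] by simp
        also have "\<dots> = \<bar>\<Sum>i\<in>I. v i * (f (z i) - f (y (fst i)))\<bar>"
          by (simp add: sum_subtractf right_diff_distrib)
        also have "\<dots> \<le> (\<Sum>i\<in>I. \<bar>v i * (f (z i) - f (y (fst i)))\<bar>)" by (rule sum_abs)
        also have "\<dots> \<le> (\<Sum>i\<in>I. v i * \<eta>)"
        proof (rule sum_mono)
          fix i assume i: "i \<in> I"
          have "\<bar>v i * (f (z i) - f (y (fst i)))\<bar> = v i * \<bar>f (z i) - f (y (fst i))\<bar>"
            using v_nn[OF i] by (simp add: abs_mult)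
          also have "\<dots> \<le> v i * \<eta>" using close[OF i] v_nn[OF i] by (intro mult_left_mono) auto
          finally show "\<bar>v i * (f (z i) - f (y (fst i)))\<bar> \<le> v i * \<eta>" .
        qed
        also have "\<dots> = \<eta>" using v_sum by (simp add: sum_distrib_right[symmetric])
        finally have a1: "\<bar>integral\<^sup>L \<mu>' f - (\<Sum>l\<in>Cs. w l * f (y l))\<bar> \<le> \<eta>" .
        have a2: "\<bar>(\<Sum>l\<in>Cs. w l * f (y l)) - integral\<^sup>L \<mu>0 f\<bar> \<le> \<eta>" using approx ffs by blast
        have a3: "2 * \<eta> < \<epsilon>" using eta(2)[of f \<epsilon>] p fe by simp
        have "\<bar>integral\<^sup>L \<mu>' f - integral\<^sup>L \<mu>0 f\<bar> < \<epsilon>" using a1 a2 a3 by linarith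
        then show "case p of (f, \<epsilon>) \<Rightarrow> \<bar>integral\<^sup>L \<mu>' f - integral\<^sup>L \<mu>0 f\<bar> < \<epsilon>" using fe by simp
      qed
    qed
    show "V \<inter> Eset F \<kappa> = {}"
    proof (rule ccontr)
      assume "V \<inter> Eset F \<kappa> \<noteq> {}"
      then obtain \<nu> where nuV: "\<nu> \<in> V" and nuE: "\<nu> \<in> Eset F \<kappa>" by blast
      have nu: "\<nu> \<in> prob_measures" using nuE unfolding Eset_def by blast
      have int: "\<And>i. i \<in> I \<Longrightarrow> v i - \<delta> < integral\<^sup>L \<nu> (bump r (z i))" using nuV unfolding V_def by auto
      have small1: "\<And>i. i \<in> I \<Longrightarrow> v i + card I * \<delta> \<le> \<kappa> / 4" using v_small d1 by fastforce
      have "\<nu> \<notin> Eset F \<kappa>"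
        by (rule Eset_bound[OF nu I r sep v_sum int small1 d2 dl kap])
      then show False using nuE by simp
    qed
  qed
qed

end



context pgrp
begin

lemma analytic_D:
  assumes "analytic A"
  shows "analytic {m (iv a) b | a b. a \<in> A \<and> b \<in> A}"
proof -
  obtain f :: "(nat \<Rightarrow> nat) \<Rightarrow> 'a" where f: "continuous_on UNIV f" "range f = A"
    using assms unfolding analytic_def by blast
  define p1 :: "(nat \<Rightarrow> nat) \<Rightarrow> (nat \<Rightarrow> nat)" where "p1 x = (\<lambda>n. x (2 * n))" for x
  define p2 :: "(nat \<Rightarrow> nat) \<Rightarrow> (nat \<Rightarrow> nat)" where "p2 x = (\<lambda>n. x (2 * n + 1))" for x
  have c1: "continuous_on UNIV p1" unfolding p1_def
    by (intro continuous_on_coordinatewise_then_product continuous_on_product_coordinates)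
  have c2: "continuous_on UNIV p2" unfolding p2_def
    by (intro continuous_on_coordinatewise_then_product continuous_on_product_coordinates)
  define h where "h x = m (iv (f (p1 x))) (f (p2 x))" for x
  have ch: "continuous_on UNIV h" unfolding h_def
    by (intro cont_m_comp cont_iv_comp continuous_on_compose2[OF f(1)] c1 c2) auto
  have "range h = {m (iv a) b | a b. a \<in> A \<and> b \<in> A}"
  proof (intro set_eqI iffI)
    fix x assume "x \<in> range h"
    then show "x \<in> {m (iv a) b | a b. a \<in> A \<and> b \<in> A}" using f(2) unfolding h_def by blast
  next
    fix x assume "x \<in> {m (iv a) b | a b. a \<in> A \<and> b \<in> A}"
    then obtain a b where ab: "a \<in> A" "b \<in> A" "x = m (iv a) b" by blast
    obtain s t where st: "a = f s" "b = f t" using ab(1,2) f(2) by blast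
    define u where "u n = (if even n then s (n div 2) else t (n div 2))" for n
    have "p1 u = s" unfolding p1_def u_def by auto
    moreover have "p2 u = t" unfolding p2_def u_def by auto
    ultimately have "h u = x" unfolding h_def using ab st by simp
    then show "x \<in> range h" by (metis rangeI)
  qed
  then show ?thesis unfolding analytic_def using ch by blast
qed

lemma cancel_l: "m (iv g) (m g z) = z"
  by (simp add: grp.assoc[symmetric])

lemma conj_mem:
  assumes "x \<in> (\<lambda>a. m (m g1 a) g2) ` A" "y \<in> (\<lambda>a. m (m g1 a) g2) ` A"
  shows "m (iv x) y \<in> conj_saturation m iv {m (iv a) b | a b. a \<in> A \<and> b \<in> A}"
proof -
  obtain a b where ab: "a \<in> A" "b \<in> A" "x = m (m g1 a) g2" "y = m (m g1 b) g2" using assms by blast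
  have "m (iv x) y = m (m (iv g2) (m (iv a) b)) (iv (iv g2))"
    unfolding ab by (simp add: grp.inverse_distrib_swap grp.assoc cancel_l)
  then show ?thesis unfolding conj_saturation_def using ab by blast
qed

lemma compact_inside:
  fixes \<mu> :: "'a measure"
  assumes mu: "\<mu> \<in> prob_measures" and X: "measure (completion \<mu>) X \<noteq> 0"
  shows "\<exists>K. compact K \<and> K \<subseteq> X \<and> measure \<mu> K > 0"
proof -
  interpret prob_space \<mu> using prob_measuresD(2)[OF mu] .
  have Xs: "X \<in> sets (completion \<mu>)" using X measure_notin_sets by blast
  define B where "B = main_part \<mu> X"
  have Bs: "B \<in> sets \<mu>" unfolding B_def using Xs by simp
  have BX: "B \<subseteq> X" unfolding B_def using main_part_null_part_Un[OF Xs] by blast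
  have "emeasure (completion \<mu>) X = emeasure \<mu> B" unfolding B_def using Xs by simp
  then have "measure (completion \<mu>) X = measure \<mu> B" by (simp add: measure_def)
  then have Bpos: "emeasure \<mu> B > 0" using X by (simp add: emeasure_eq_measure less_le)
  have Bb: "B \<in> sets borel" using Bs prob_measuresD(1)[OF mu] by simp
  have "emeasure \<mu> B = (SUP K \<in> {K. K \<subseteq> B \<and> compact K}. emeasure \<mu> K)"
    using inner_regular[of \<mu> B] prob_measuresD(1)[OF mu] Bb by simp
  with Bpos obtain K where K: "K \<subseteq> B" "compact K" "emeasure \<mu> K > 0"
    by (metis (no_types, lifting) less_SUP_iff mem_Collect_eq)
  then have "measure \<mu> K > 0" by (simp add: emeasure_eq_measure)
  then show ?thesis using K BX by blast
qed

end



context pgrp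
begin

lemma main:
  assumes C: "condition_C m iv" and A: "analytic A"
    and Dm: "meager_in euclidean {m (iv a) b | a b. a \<in> A \<and> b \<in> A}"
  shows "comeager_in weak_star_topology (T_set m A)"
proof -
  define D where "D = {m (iv a) b | a b. a \<in> A \<and> b \<in> A}"
  define N where "N = conj_saturation m iv D"
  have "meager_in euclidean N"
    using C analytic_D[OF A] Dm unfolding condition_C_def N_def D_def by blast
  then obtain F :: "nat \<Rightarrow> 'a set" where F: "\<And>n. nowhere_dense_in euclidean (F n)" and NF: "N \<subseteq> (\<Union>n. F n)"
    unfolding meager_in_def by blast
  have cF: "cnd (closure (F n))" for n
    using F[of n] unfolding nowhere_dense_in_def cnd_def by simp
  obtain a0 where a0: "a0 \<in> A" using A unfolding analytic_def by blast
  have "e \<in> D" unfolding D_def using a0 by force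
  then have "m (m e e) (iv e) \<in> N" unfolding N_def conj_saturation_def by blast
  then have eN: "e \<in> N" by simp
  then obtain i0 where i0: "e \<in> F i0" using NF by blast
  define Fc where "Fc n = (\<Union>i\<in>{..n}. closure (F i)) \<union> closure (F i0)" for n
  have cFc: "cnd (Fc n)" for n unfolding Fc_def by (intro cnd_Un cnd_UN_finite cF) auto
  have eFc: "e \<in> Fc n" for n unfolding Fc_def using i0 closure_subset by blast
  have monoFc: "n \<le> n' \<Longrightarrow> Fc n \<subseteq> Fc n'" for n n' unfolding Fc_def by (auto intro: order_trans)
  have NFc: "N \<subseteq> (\<Union>n. Fc n)"
  proof
    fix x assume "x \<in> N"
    then obtain n where "x \<in> F n" using NF by blast
    then have "x \<in> closure (F n)" using closure_subset by blast
    then have "x \<in> Fc n" unfolding Fc_def by blast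
    then show "x \<in> (\<Union>n. Fc n)" by blast
  qed
  have compl: "\<exists>n k. \<mu> \<in> Eset (Fc n) (1 / real (Suc k))"
    if mu: "\<mu> \<in> prob_measures" and nT: "\<mu> \<notin> T_set m A" for \<mu>
  proof -
    obtain g1 g2 where X: "measure (completion \<mu>) ((\<lambda>a. m (m g1 a) g2) ` A) \<noteq> 0"
      using mu nT unfolding T_set_def by blast
    obtain K where K: "compact K" "K \<subseteq> (\<lambda>a. m (m g1 a) g2) ` A" "measure \<mu> K > 0"
      using compact_inside[OF mu X] by blast
    interpret prob_space \<mu> using prob_measuresD(2)[OF mu] .
    interpret N2: prob_space "\<mu> \<Otimes>\<^sub>M \<mu>" by (rule prob_space_pair) unfold_locales
    define An where "An n = {p \<in> K \<times> K. m (iv (fst p)) (snd p) \<in> Fc n}" for n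
    have Kc: "closed K" using K(1) by (rule compact_imp_closed)
    have An_sets: "An n \<in> sets (\<mu> \<Otimes>\<^sub>M \<mu>)" for n
    proof -
      have "An n = (K \<times> K) \<inter> (\<lambda>p. m (iv (fst p)) (snd p)) -` Fc n" unfolding An_def by auto
      moreover have "closed ((K \<times> K) \<inter> (\<lambda>p. m (iv (fst p)) (snd p)) -` Fc n)"
        using Kc cFc[of n] cont_closed_vimage[OF cont_g] unfolding cnd_def
        by (intro closed_Int closed_Times) auto
      ultimately have "An n \<in> sets borel" by simp
      then show ?thesis using sets_pair_P[OF mu] by simp
    qed
    have inc: "incseq An" unfolding incseq_def An_def using monoFc by blast
    have UA: "(\<Union>n. An n) = K \<times> K"
    proof
      show "(\<Union>n. An n) \<subseteq> K \<times> K" unfolding An_def by auto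
      show "K \<times> K \<subseteq> (\<Union>n. An n)"
      proof
        fix p assume p: "p \<in> K \<times> K"
        then have "m (iv (fst p)) (snd p) \<in> N"
          unfolding N_def D_def using K(2) conj_mem[of "fst p" g1 g2 A "snd p"] by (auto simp: mem_Times_iff)
        then obtain n where "m (iv (fst p)) (snd p) \<in> Fc n" using NFc by blast
        then show "p \<in> (\<Union>n. An n)" using p unfolding An_def by blast
      qed
    qed
    have Kb: "K \<in> sets borel" using K(1) by (rule borel_compact)
    have lim: "(\<lambda>n. measure (\<mu> \<Otimes>\<^sub>M \<mu>) (An n)) \<longlonglongrightarrow> measure (\<mu> \<Otimes>\<^sub>M \<mu>) (K \<times> K)"
      using N2.finite_Lim_measure_incseq[OF _ inc] An_sets UA by auto
    have "measure (\<mu> \<Otimes>\<^sub>M \<mu>) (K \<times> K) = (measure \<mu> K)\<^sup>2"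
      using measure_pair_Times_P[OF mu Kb Kb] by (simp add: power2_eq_square)
    moreover have "(measure \<mu> K)\<^sup>2 / 2 < (measure \<mu> K)\<^sup>2" using K(3) by simp
    ultimately have "eventually (\<lambda>n. (measure \<mu> K)\<^sup>2 / 2 < measure (\<mu> \<Otimes>\<^sub>M \<mu>) (An n)) sequentially"
      using order_tendstoD(1)[OF lim, of "(measure \<mu> K)\<^sup>2 / 2"] by simp
    then obtain n where n: "(measure \<mu> K)\<^sup>2 / 2 < measure (\<mu> \<Otimes>\<^sub>M \<mu>) (An n)"
      by (meson eventually_sequentially order_refl)
    obtain k where k: "k > 0" "inverse (real k) < measure \<mu> K" using ex_inverse_of_nat_less[OF K(3)] by blast
    have "1 / real (Suc (k - 1)) \<le> measure \<mu> K" using k by (simp add: inverse_eq_divide)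
    then have "\<mu> \<in> Eset (Fc n) (1 / real (Suc (k - 1)))"
      unfolding Eset_def using mu K(1) n unfolding An_def by (auto intro!: exI[of _ K])
    then show ?thesis by blast
  qed
  define G where "G j = Eset (Fc (fst (prod_decode j))) (1 / real (Suc (snd (prod_decode j))))" for j
  have G: "nowhere_dense_in weak_star_topology (G j)" for j
    unfolding G_def by (rule Eset_nowhere_dense[OF cFc eFc]) simp
  have "topspace weak_star_topology - T_set m A \<subseteq> (\<Union>j. G j)"
  proof
    fix \<mu> assume "\<mu> \<in> topspace weak_star_topology - T_set m A"
    then have "\<mu> \<in> prob_measures" "\<mu> \<notin> T_set m A" by (auto simp: topspace_weak)
    then obtain n k where "\<mu> \<in> Eset (Fc n) (1 / real (Suc k))" using compl by blast
    then have "\<mu> \<in> G (prod_encode (n, k))" unfolding G_def by simp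
    then show "\<mu> \<in> (\<Union>j. G j)" by blast
  qed
  then have "meager_in weak_star_topology (topspace weak_star_topology - T_set m A)"
    unfolding meager_in_def using G by blast
  moreover have "T_set m A \<subseteq> topspace weak_star_topology"
    unfolding T_set_def topspace_weak by blast
  ultimately show ?thesis unfolding comeager_in_def by blast
qed

end

theorem proposition3:
  fixes m :: "'a::polish_space \<Rightarrow> 'a \<Rightarrow> 'a" and e :: 'a and iv :: "'a \<Rightarrow> 'a"
    and A :: "'a set"
  assumes "polish_group m e iv"
    and "uncountable (UNIV :: 'a set)"
    and "condition_C m iv"
    and "analytic A"
    and "meager_in euclidean {m (iv a) b | a b. a \<in> A \<and> b \<in> A}"
  shows "comeager_in weak_star_topology (T_set m A)"
proof -
  interpret pgrp m e iv using assms(1) by unfold_locales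
  show ?thesis by (rule main[OF assms(3,4,5)])
qed



end
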